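(* Assume the setting and the nsCRAIG recurrence described in the context, and let $k\ge1$ be such that $Q_k,B_k,H_k$ are defined. Then $H_k$ is nonsingular, and the vector $p^{(k)}=Q_ky_k$ with $y_k=-B_k^{-1}H_k^{-1}(\beta_1e_1)$ coincides with the $k$-th iterate of the full orthogonalization method (FOM), started from the zero initial guess and preconditioned with $N$, applied to the Schur-complement equation $Sp=-b$, $S=A^TM^{-1}A+C$; that is, $p^{(k)}$ is the unique $p\in\mathcal{K}_k:=\operatorname{span}\{N^{-1}b,(N^{-1}S)N^{-1}b,\dots,(N^{-1}S)^{k-1}N^{-1}b\}$ with $(-b-Sp)^Tx=0$ for all $x\in\mathcal{K}_k$. Moreover the nsCRAIG iterate $u^{(k)}$ satisfies $u^{(k)}=-M^{-1}Ap^{(k)}$.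
   Context: Setting: $M\in\mathbb{R}^{m\times m}$ is nonsymmetric and positive definite ($x^TMx>0$ for all $x\ne0$); $A\in\mathbb{R}^{m\times n}$ ($n\le m$) has full column rank; $C\in\mathbb{R}^{n\times n}$ is symmetric positive semidefinite; $b\in\mathbb{R}^n$ is nonzero; $N\in\mathbb{R}^{n\times n}$ is symmetric positive definite. Write $\|x\|_G=(x^TGx)^{1/2}$ for $G$ positive definite (for nonsymmetric $M$ this is the norm of its symmetric part). The generalized saddle point system is $Mu+Ap=0$, $A^Tu-Cp=b$, with unique solution $(u_*,p_* )$; $S=A^TM^{-1}A+C$. nsCRAIG recurrence (exact arithmetic): Initialization: $\beta_1=\|b\|_{N^{-1}}$, $q_1=N^{-1}b/\beta_1$, $Q_1=[q_1]$, $r_1=q_1$, $w_1=M^{-1}Aq_1$, $s_1=Cr_1$, $\alpha_1=(w_1^TMw_1+r_1^Ts_1)^{1/2}$, $v_1=w_1/\alpha_1$, $t_1=s_1/\alpha_1$, $\chi_1=\beta_1/\alpha_1$. For $k=1,2,\dots$: $\hat g_k=N^{-1}(A^Tv_k+t_k)$, $h_k=Q_k^TN\hat g_k\in\mathbb{R}^k$, $g_k=\hat g_k-Q_kh_k$, $\beta_{k+1}=\|g_k\|_N$; if $\beta_{k+1}=0$ the recurrence stops; otherwise $q_{k+1}=g_k/\beta_{k+1}$, $Q_{k+1}=[Q_k,q_{k+1}]$, $w_{k+1}=M^{-1}Aq_{k+1}-\beta_{k+1}v_k$, $r_{k+1}=q_{k+1}-(\beta_{k+1}/\alpha_k)r_k$,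 $s_{k+1}=Cr_{k+1}$, $\alpha_{k+1}=(w_{k+1}^TMw_{k+1}+r_{k+1}^Ts_{k+1})^{1/2}$, $v_{k+1}=w_{k+1}/\alpha_{k+1}$, $t_{k+1}=s_{k+1}/\alpha_{k+1}$, $\chi_{k+1}=-(\beta_{k+1}/\alpha_{k+1})\chi_k$. Matrices: $B_k\in\mathbb{R}^{k\times k}$ upper bidiagonal with $(B_k)_{ii}=\alpha_i$, $(B_k)_{i,i+1}=\beta_{i+1}$; $H_k\in\mathbb{R}^{k\times k}$ upper Hessenberg whose $j$-th column has entries $(H_k)_{ij}=(h_j)_i$ for $i\le j$, $(H_k)_{j+1,j}=\beta_{j+1}$ (if $j<k$), and zeros otherwise. The nsCRAIG iterates at step $k$ are $y_k=-B_k^{-1}H_k^{-1}(\beta_1e_1)$, $p^{(k)}=Q_ky_k$, $u^{(k)}=-M^{-1}Ap^{(k)}$, with $e_1$ the first unit vector of $\mathbb{R}^k$. *)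

theory Defs
  imports Complex_Main "Jordan_Normal_Form.Gauss_Jordan_Elimination" "Jordan_Normal_Form.DL_Rank"
begin

definition minv :: "real mat \<Rightarrow> real mat" where
  "minv G = the (mat_inverse G)"

definition gnorm :: "real mat \<Rightarrow> real vec \<Rightarrow> real" where
  "gnorm G x = sqrt (x \<bullet> (G *\<^sub>v x))"

text \<open>State of the nsCRAIG recurrence after step k (k \<ge> 1):
  (q_1..q_k, alpha_1..alpha_k, beta_1..beta_k, h_1..h_(k-1), v_k, t_k, r_k).
  Lists are 0-based: element i of a list is the quantity with paper index i+1.\<close>
type_synonym craig_state =
  "real vec list \<times> real list \<times> real list \<times> real vec list \<times> real vec \<times> real vec \<times> real vec"

definition craig_init :: "real mat \<Rightarrow> real mat \<Rightarrow> real mat \<Rightarrow> real mat \<Rightarrow> real vec \<Rightarrow> craig_state" where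
  "craig_init M A C N b =
    (let \<beta>1 = gnorm (minv N) b;
         q1 = (1 / \<beta>1) \<cdot>\<^sub>v (minv N *\<^sub>v b);
         r1 = q1;
         w1 = minv M *\<^sub>v (A *\<^sub>v q1);
         s1 = C *\<^sub>v r1;
         \<alpha>1 = sqrt (w1 \<bullet> (M *\<^sub>v w1) + r1 \<bullet> s1);
         v1 = (1 / \<alpha>1) \<cdot>\<^sub>v w1;
         t1 = (1 / \<alpha>1) \<cdot>\<^sub>v s1
     in ([q1], [\<alpha>1], [\<beta>1], [], v1, t1, r1))"

definition craig_Q :: "nat \<Rightarrow> craig_state \<Rightarrow> real mat" where
  "craig_Q n st = (case st of (qs, als, bes, hs, v, t, r) \<Rightarrow> mat_of_cols n qs)"

definition craig_ghat :: "real mat \<Rightarrow> real mat \<Rightarrow> craig_state \<Rightarrow> real vec" where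
  "craig_ghat A N st = (case st of (qs, als, bes, hs, v, t, r) \<Rightarrow>
     minv N *\<^sub>v (transpose_mat A *\<^sub>v v + t))"

definition craig_h :: "real mat \<Rightarrow> real mat \<Rightarrow> craig_state \<Rightarrow> real vec" where
  "craig_h A N st = transpose_mat (craig_Q (dim_row N) st) *\<^sub>v (N *\<^sub>v craig_ghat A N st)"

text \<open>One step k \<rightarrow> k+1 of the recurrence (computed without the stopping test;
  the stopping test beta_(k+1) = 0 is imposed as a hypothesis where needed).\<close>
definition craig_step :: "real mat \<Rightarrow> real mat \<Rightarrow> real mat \<Rightarrow> real mat \<Rightarrow> craig_state \<Rightarrow> craig_state" where
  "craig_step M A C N st = (case st of (qs, als, bes, hs, v, t, r) \<Rightarrow>
     (let gh = craig_ghat A N st;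
          h = craig_h A N st;
          g = gh - craig_Q (dim_row N) st *\<^sub>v h;
          \<beta>' = gnorm N g;
          q' = (1 / \<beta>') \<cdot>\<^sub>v g;
          w' = minv M *\<^sub>v (A *\<^sub>v q') - \<beta>' \<cdot>\<^sub>v v;
          r' = q' - (\<beta>' / last als) \<cdot>\<^sub>v r;
          s' = C *\<^sub>v r';
          \<alpha>' = sqrt (w' \<bullet> (M *\<^sub>v w') + r' \<bullet> s');
          v' = (1 / \<alpha>') \<cdot>\<^sub>v w';
          t' = (1 / \<alpha>') \<cdot>\<^sub>v s'
      in (qs @ [q'], als @ [\<alpha>'], bes @ [\<beta>'], hs @ [h], v', t', r')))"

definition craig_state :: "real mat \<Rightarrow> real mat \<Rightarrow> real mat \<Rightarrow> real mat \<Rightarrow> real vec \<Rightarrow> nat \<Rightarrow> craig_state" where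
  "craig_state M A C N b k = (craig_step M A C N ^^ (k - 1)) (craig_init M A C N b)"

definition craig_alpha :: "real mat \<Rightarrow> real mat \<Rightarrow> real mat \<Rightarrow> real mat \<Rightarrow> real vec \<Rightarrow> nat \<Rightarrow> real" where
  "craig_alpha M A C N b j = (case craig_state M A C N b j of (qs, als, bes, hs, v, t, r) \<Rightarrow> last als)"

text \<open>beta_j for j \<ge> 2 is produced in step j-1 (beta_1 at initialization).\<close>
definition craig_beta :: "real mat \<Rightarrow> real mat \<Rightarrow> real mat \<Rightarrow> real mat \<Rightarrow> real vec \<Rightarrow> nat \<Rightarrow> real" where
  "craig_beta M A C N b j = (case craig_state M A C N b j of (qs, als, bes, hs, v, t, r) \<Rightarrow> last bes)"

definition nscraig_Q :: "real mat \<Rightarrow> real mat \<Rightarrow> real mat \<Rightarrow> real mat \<Rightarrow> real vec \<Rightarrow> nat \<Rightarrow> real mat" where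
  "nscraig_Q M A C N b k = craig_Q (dim_vec b) (craig_state M A C N b k)"

definition nscraig_B :: "real mat \<Rightarrow> real mat \<Rightarrow> real mat \<Rightarrow> real mat \<Rightarrow> real vec \<Rightarrow> nat \<Rightarrow> real mat" where
  "nscraig_B M A C N b k = mat k k (\<lambda>(i, j).
     if i = j then craig_alpha M A C N b (i + 1)
     else if j = i + 1 then craig_beta M A C N b (i + 2)
     else 0)"

definition nscraig_H :: "real mat \<Rightarrow> real mat \<Rightarrow> real mat \<Rightarrow> real mat \<Rightarrow> real vec \<Rightarrow> nat \<Rightarrow> real mat" where
  "nscraig_H M A C N b k = mat k k (\<lambda>(i, j).
     if i \<le> j then craig_h A N (craig_state M A C N b (j + 1)) $ i
     else if i = j + 1 then craig_beta M A C N b (j + 2)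
     else 0)"

definition nscraig_y :: "real mat \<Rightarrow> real mat \<Rightarrow> real mat \<Rightarrow> real mat \<Rightarrow> real vec \<Rightarrow> nat \<Rightarrow> real vec" where
  "nscraig_y M A C N b k =
     - (minv (nscraig_B M A C N b k) *\<^sub>v (minv (nscraig_H M A C N b k) *\<^sub>v
          (craig_beta M A C N b 1 \<cdot>\<^sub>v unit_vec k 0)))"

definition nscraig_p :: "real mat \<Rightarrow> real mat \<Rightarrow> real mat \<Rightarrow> real mat \<Rightarrow> real vec \<Rightarrow> nat \<Rightarrow> real vec" where
  "nscraig_p M A C N b k = nscraig_Q M A C N b k *\<^sub>v nscraig_y M A C N b k"

definition nscraig_u :: "real mat \<Rightarrow> real mat \<Rightarrow> real mat \<Rightarrow> real mat \<Rightarrow> real vec \<Rightarrow> nat \<Rightarrow> real vec" where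
  "nscraig_u M A C N b k = - (minv M *\<^sub>v (A *\<^sub>v nscraig_p M A C N b k))"

definition schur :: "real mat \<Rightarrow> real mat \<Rightarrow> real mat \<Rightarrow> real mat" where
  "schur M A C = transpose_mat A * minv M * A + C"

definition krylov :: "real mat \<Rightarrow> real mat \<Rightarrow> real vec \<Rightarrow> nat \<Rightarrow> real vec set" where
  "krylov N S b k = LinearCombinations.module.span class_ring (module_vec TYPE(real) (dim_vec b))
     ((\<lambda>i. ((minv N * S) ^\<^sub>m i) *\<^sub>v (minv N *\<^sub>v b)) ` {0..<k})"

end

theory Submission
  imports Defs
begin


lemma minv_ok_det:
  fixes G :: "real mat"
  assumes G: "G \<in> carrier_mat d d" and dG: "det G \<noteq> 0"
  shows "minv G \<in> carrier_mat d d \<and> G * minv G = 1\<^sub>m d \<and> minv G * G = 1\<^sub>m d"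
proof -
  from det_non_zero_imp_unit[OF G dG] have U: "G \<in> Units (ring_mat TYPE(real) d undefined)" .
  then obtain B where "mat_inverse G = Some B"
    using mat_inverse(1)[OF G, of undefined] by (cases "mat_inverse G") auto
  then show ?thesis using mat_inverse(2)[OF G] unfolding minv_def by auto
qed

lemma minv_ok:
  fixes G :: "real mat"
  assumes G: "G \<in> carrier_mat d d" and inj: "\<forall>x\<in>carrier_vec d. G *\<^sub>v x = 0\<^sub>v d \<longrightarrow> x = 0\<^sub>v d"
  shows "minv G \<in> carrier_mat d d \<and> G * minv G = 1\<^sub>m d \<and> minv G * G = 1\<^sub>m d"
proof -
  have "det G \<noteq> 0" using det_0_iff_vec_prod_zero[OF G] inj by blast
  then show ?thesis using minv_ok_det[OF G] by blast
qed

lemma vec_minus_add: "(x::real vec) \<in> carrier_vec d \<Longrightarrow> y \<in> carrier_vec d \<Longrightarrow> x - y + y = x"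
  by (rule eq_vecI) auto

lemma mat_vec_uminus: "(G::real mat) \<in> carrier_mat a c \<Longrightarrow> v \<in> carrier_vec c \<Longrightarrow> G *\<^sub>v (- v) = - (G *\<^sub>v v)"
  by (rule eq_vecI) (auto simp: scalar_prod_def sum_negf)

lemma mat_inv_vec: "(G::real mat) \<in> carrier_mat d d \<Longrightarrow> H \<in> carrier_mat d d \<Longrightarrow> G * H = 1\<^sub>m d \<Longrightarrow>
   w \<in> carrier_vec d \<Longrightarrow> G *\<^sub>v (H *\<^sub>v w) = w"
  by (metis assoc_mult_mat_vec one_mult_mat_vec)

lemma mat_vec_zero: "(G::'a::comm_ring_1 mat) \<in> carrier_mat a c \<Longrightarrow> G *\<^sub>v 0\<^sub>v c = 0\<^sub>v a"
  by (rule eq_vecI) (auto simp: row_def)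

lemma sprod_mat_vec:
  fixes Q :: "real mat"
  assumes x: "x \<in> carrier_vec nr" and Q: "Q \<in> carrier_mat nr nc" and y: "y \<in> carrier_vec nc"
  shows "x \<bullet> (Q *\<^sub>v y) = (\<Sum>c<nc. (col Q c \<bullet> x) * y $ c)"
proof -
  have "x \<bullet> (Q *\<^sub>v y) = (Q\<^sup>T *\<^sub>v x) \<bullet> y" using transpose_vec_mult_scalar[OF Q y x] by simp
  also have "\<dots> = (\<Sum>c<nc. (Q\<^sup>T *\<^sub>v x) $ c * y $ c)" using y Q unfolding scalar_prod_def
    by (auto intro: sum.cong)
  also have "\<dots> = (\<Sum>c<nc. (col Q c \<bullet> x) * y $ c)" using Q
    by (intro sum.cong) (auto simp: row_transpose)
  finally show ?thesis .
qed

lemma A_inj_of_rank: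
  fixes A :: "real mat"
  assumes A: "A \<in> carrier_mat m n" and r: "vec_space.rank m A = n"
  shows "\<forall>x\<in>carrier_vec n. A *\<^sub>v x = 0\<^sub>v m \<longrightarrow> x = 0\<^sub>v n"
proof -
  interpret vec_space "TYPE(real)" m .
  have dist: "distinct (cols A)"
  proof (rule ccontr)
    assume nd: "\<not> distinct (cols A)"
    obtain S where mx: "maximal S (\<lambda>T. T \<subseteq> set (cols A) \<and> lin_indpt T)"
      using maximal_exists[of "(\<lambda>T. T \<subseteq> set (cols A) \<and> lin_indpt T)" "card (set (cols A))" "{}"]
      by (meson List.finite_set card_mono empty_iff empty_subsetI finite_lin_indpt2 rev_finite_subset)
    then have "card S \<le> card (set (cols A))" by (simp add: card_mono maximal_def)
    moreover have "card (set (cols A)) < length (cols A)"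
      using nd card_distinct card_length le_neq_implies_less by blast
    ultimately have "card S < n" using A by auto
    moreover have "rank A = card S" using rank_card_indpt[OF A mx] .
    ultimately show False using r by simp
  qed
  have li: "lin_indpt (set (cols A))" using full_rank_lin_indpt[OF A r dist] .
  show ?thesis
  proof (intro ballI impI, rule ccontr)
    fix x assume x: "x \<in> carrier_vec n" "A *\<^sub>v x = 0\<^sub>v m" "x \<noteq> 0\<^sub>v n"
    from lin_depI[OF A x(1) x(3) x(2) dist] li show False by simp
  qed
qed



locale cset =
  fixes M A C N :: "real mat" and b :: "real vec" and m n k :: nat
  assumes M: "M \<in> carrier_mat m m"
    and M_pd: "\<forall>x \<in> carrier_vec m. x \<noteq> 0\<^sub>v m \<longrightarrow> x \<bullet> (M *\<^sub>v x) > 0"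
    and A: "A \<in> carrier_mat m n"
    and A_inj: "\<forall>x\<in>carrier_vec n. A *\<^sub>v x = 0\<^sub>v m \<longrightarrow> x = 0\<^sub>v n"
    and C: "C \<in> carrier_mat n n" and C_sym: "transpose_mat C = C"
    and C_psd: "\<forall>x \<in> carrier_vec n. x \<bullet> (C *\<^sub>v x) \<ge> 0"
    and b: "b \<in> carrier_vec n" and b_nz: "b \<noteq> 0\<^sub>v n"
    and N: "N \<in> carrier_mat n n" and N_sym: "transpose_mat N = N"
    and N_pd: "\<forall>x \<in> carrier_vec n. x \<noteq> 0\<^sub>v n \<longrightarrow> x \<bullet> (N *\<^sub>v x) > 0"
    and k: "1 \<le> k"
    and defined: "\<forall>j \<in> {2..k}. craig_beta M A C N b j \<noteq> 0"
begin

definition "st j = craig_state M A C N b j"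
definition "q i = fst (st (Suc i)) ! i"
definition "al i = craig_alpha M A C N b (Suc i)"
definition "be i = craig_beta M A C N b (Suc i)"
definition "hh i = craig_h A N (st (Suc i))"
definition "gh i = craig_ghat A N (st (Suc i))"
definition "vv i = (case st (Suc i) of (qs, als, bes, hs, v, t, r) \<Rightarrow> v)"
definition "tt i = (case st (Suc i) of (qs, als, bes, hs, v, t, r) \<Rightarrow> t)"
definition "rr i = (case st (Suc i) of (qs, als, bes, hs, v, t, r) \<Rightarrow> r)"
definition "Qm j = mat_of_cols n (map q [0..<j])"

lemma st_Suc: "st (Suc (Suc l)) = craig_step M A C N (st (Suc l))"
  unfolding st_def craig_state_def by simp

lemma st_struct: "st (Suc l) = (map q [0..<Suc l], map al [0..<Suc l], map be [0..<Suc l],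
    map hh [0..<l], vv l, tt l, rr l)"
proof (induction l)
  case 0
  obtain q' a' b' v' t' r' where X: "st (Suc 0) = ([q'], [a'], [b'], [], v', t', r')"
    unfolding st_def craig_state_def craig_init_def by (simp add: Let_def)
  show ?case using X unfolding q_def al_def be_def craig_alpha_def craig_beta_def vv_def tt_def rr_def
    by (simp add: st_def)
next
  case (Suc l)
  obtain q' a' b' v' t' r' where X: "st (Suc (Suc l)) = (map q [0..<Suc l] @ [q'], map al [0..<Suc l] @ [a'],
     map be [0..<Suc l] @ [b'], map hh [0..<l] @ [hh l], v', t', r')"
    unfolding st_Suc using Suc.IH unfolding craig_step_def hh_def by (simp add: Let_def Suc.IH)
  have "q (Suc l) = q'" unfolding q_def using X by (simp add: nth_append)
  moreover have "al (Suc l) = a'" unfolding al_def craig_alpha_def using X by (simp add: st_def)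
  moreover have "be (Suc l) = b'" unfolding be_def craig_beta_def using X by (simp add: st_def)
  ultimately show ?case using X unfolding vv_def tt_def rr_def by simp
qed

lemma dimN: "dim_row N = n" using N by auto

lemma gh_eq: "gh l = minv N *\<^sub>v (transpose_mat A *\<^sub>v vv l + tt l)"
  unfolding gh_def st_struct craig_ghat_def by simp

lemma hh_eq: "hh l = transpose_mat (Qm (Suc l)) *\<^sub>v (N *\<^sub>v gh l)"
  unfolding hh_def craig_h_def Qm_def craig_Q_def gh_def[symmetric] dimN by (simp add: st_struct)

lemma step_eqs:
  fixes l :: nat
  defines "g \<equiv> gh l - Qm (Suc l) *\<^sub>v hh l"
  defines "w' \<equiv> minv M *\<^sub>v (A *\<^sub>v q (Suc l)) - be (Suc l) \<cdot>\<^sub>v vv l"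
  shows "be (Suc l) = gnorm N g"
    and "q (Suc l) = (1 / be (Suc l)) \<cdot>\<^sub>v g"
    and "rr (Suc l) = q (Suc l) - (be (Suc l) / al l) \<cdot>\<^sub>v rr l"
    and "al (Suc l) = sqrt (w' \<bullet> (M *\<^sub>v w') + rr (Suc l) \<bullet> (C *\<^sub>v rr (Suc l)))"
    and "vv (Suc l) = (1 / al (Suc l)) \<cdot>\<^sub>v w'"
    and "tt (Suc l) = (1 / al (Suc l)) \<cdot>\<^sub>v (C *\<^sub>v rr (Suc l))"
proof -
  have E: "st (Suc (Suc l)) = craig_step M A C N (st (Suc l))" by (rule st_Suc)
  have E2: "craig_step M A C N (st (Suc l)) = craig_step M A C N (map q [0..<Suc l], map al [0..<Suc l], map be [0..<Suc l],
    map hh [0..<l], vv l, tt l, rr l)" by (simp only: st_struct)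
  have gh': "craig_ghat A N (map q [0..<Suc l], map al [0..<Suc l], map be [0..<Suc l],
    map hh [0..<l], vv l, tt l, rr l) = gh l" using gh_def[of l] st_struct[of l] by simp
  have hh': "craig_h A N (map q [0..<Suc l], map al [0..<Suc l], map be [0..<Suc l],
    map hh [0..<l], vv l, tt l, rr l) = hh l" using hh_def[of l] st_struct[of l] by simp
  have Q': "craig_Q (dim_row N) (map q [0..<Suc l], map al [0..<Suc l], map be [0..<Suc l],
    map hh [0..<l], vv l, tt l, rr l) = Qm (Suc l)" unfolding craig_Q_def Qm_def dimN by simp
  note X = E[unfolded E2 st_struct craig_step_def Let_def gh' hh' Q' prod.case, folded g_def]
  from X show 1: "be (Suc l) = gnorm N g" by simp
  from X show 2: "q (Suc l) = (1 / be (Suc l)) \<cdot>\<^sub>v g" by (simp add: 1)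
  from X show 3: "rr (Suc l) = q (Suc l) - (be (Suc l) / al l) \<cdot>\<^sub>v rr l" by (simp add: 1 2)
  from X show 4: "al (Suc l) = sqrt (w' \<bullet> (M *\<^sub>v w') + rr (Suc l) \<bullet> (C *\<^sub>v rr (Suc l)))"
    unfolding w'_def by (simp add: 1 2 3)
  from X show "vv (Suc l) = (1 / al (Suc l)) \<cdot>\<^sub>v w'" unfolding w'_def by (simp add: 1 2 3 4[unfolded w'_def])
  from X show "tt (Suc l) = (1 / al (Suc l)) \<cdot>\<^sub>v (C *\<^sub>v rr (Suc l))" by (simp add: 1 2 3 4[unfolded w'_def])
qed

lemma init_eqs:
  defines "w \<equiv> minv M *\<^sub>v (A *\<^sub>v q 0)"
  shows "be 0 = gnorm (minv N) b"
    and "q 0 = (1 / be 0) \<cdot>\<^sub>v (minv N *\<^sub>v b)"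
    and "rr 0 = q 0"
    and "al 0 = sqrt (w \<bullet> (M *\<^sub>v w) + rr 0 \<bullet> (C *\<^sub>v rr 0))"
    and "vv 0 = (1 / al 0) \<cdot>\<^sub>v w"
    and "tt 0 = (1 / al 0) \<cdot>\<^sub>v (C *\<^sub>v rr 0)"
proof -
  have E: "st (Suc 0) = craig_init M A C N b" unfolding st_def craig_state_def by simp
  note X = E[unfolded st_struct craig_init_def Let_def]
  from X show 1: "be 0 = gnorm (minv N) b" by simp
  from X show 2: "q 0 = (1 / be 0) \<cdot>\<^sub>v (minv N *\<^sub>v b)" by (simp add: 1)
  from X show 3: "rr 0 = q 0" by (simp add: 1 2)
  from X show 4: "al 0 = sqrt (w \<bullet> (M *\<^sub>v w) + rr 0 \<bullet> (C *\<^sub>v rr 0))" unfolding w_def by (simp add: 1 2 3)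
  from X show "vv 0 = (1 / al 0) \<cdot>\<^sub>v w" unfolding w_def by (simp add: 1 2 3 4[unfolded w_def])
  from X show "tt 0 = (1 / al 0) \<cdot>\<^sub>v (C *\<^sub>v rr 0)" by (simp add: 1 2 3 4[unfolded w_def])
qed

end

context cset begin

lemma M_inj: "\<forall>x\<in>carrier_vec m. M *\<^sub>v x = 0\<^sub>v m \<longrightarrow> x = 0\<^sub>v m"
  using M_pd by (metis less_irrefl scalar_prod_right_zero)
lemma N_inj: "\<forall>x\<in>carrier_vec n. N *\<^sub>v x = 0\<^sub>v n \<longrightarrow> x = 0\<^sub>v n"
  using N_pd by (metis less_irrefl scalar_prod_right_zero)

lemma Mi: "minv M \<in> carrier_mat m m" "M * minv M = 1\<^sub>m m" "minv M * M = 1\<^sub>m m"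
  using minv_ok[OF M M_inj] by auto
lemma Ni: "minv N \<in> carrier_mat n n" "N * minv N = 1\<^sub>m n" "minv N * N = 1\<^sub>m n"
  using minv_ok[OF N N_inj] by auto

lemma M_Mi: "x \<in> carrier_vec m \<Longrightarrow> M *\<^sub>v (minv M *\<^sub>v x) = x"
  by (metis Mi(1,2) M assoc_mult_mat_vec one_mult_mat_vec)
lemma N_Ni: "x \<in> carrier_vec n \<Longrightarrow> N *\<^sub>v (minv N *\<^sub>v x) = x"
  by (metis Ni(1,2) N assoc_mult_mat_vec one_mult_mat_vec)

lemma Mi_pd: assumes x: "x \<in> carrier_vec m" "x \<noteq> 0\<^sub>v m" shows "x \<bullet> (minv M *\<^sub>v x) > 0"
proof -
  let ?z = "minv M *\<^sub>v x"
  have z: "?z \<in> carrier_vec m" using Mi(1) x by auto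
  have "?z \<noteq> 0\<^sub>v m"
  proof
    assume "?z = 0\<^sub>v m"
    then have "x = M *\<^sub>v 0\<^sub>v m" using M_Mi[OF x(1)] by simp
    then show False using x(2) M by auto
  qed
  then have "?z \<bullet> (M *\<^sub>v ?z) > 0" using M_pd z by auto
  then show ?thesis using M_Mi[OF x(1)] comm_scalar_prod[OF z x(1)] by simp
qed

lemma Ni_pd: assumes x: "x \<in> carrier_vec n" "x \<noteq> 0\<^sub>v n" shows "x \<bullet> (minv N *\<^sub>v x) > 0"
proof -
  let ?z = "minv N *\<^sub>v x"
  have z: "?z \<in> carrier_vec n" using Ni(1) x by auto
  have "?z \<noteq> 0\<^sub>v n"
  proof
    assume "?z = 0\<^sub>v n"
    then have "x = N *\<^sub>v 0\<^sub>v n" using N_Ni[OF x(1)] by simp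
    then show False using x(2) N by auto
  qed
  then have "?z \<bullet> (N *\<^sub>v ?z) > 0" using N_pd z by auto
  then show ?thesis using N_Ni[OF x(1)] comm_scalar_prod[OF z x(1)] by simp
qed

lemma N_symm: assumes "x \<in> carrier_vec n" "y \<in> carrier_vec n" shows "x \<bullet> (N *\<^sub>v y) = y \<bullet> (N *\<^sub>v x)"
proof -
  have "x \<bullet> (N *\<^sub>v y) = (N\<^sup>T *\<^sub>v x) \<bullet> y" using transpose_vec_mult_scalar[OF N assms(2) assms(1)] by simp
  also have "\<dots> = y \<bullet> (N *\<^sub>v x)" using N_sym assms N by (simp add: comm_scalar_prod[of _ n])
  finally show ?thesis .
qed

lemma N_nonneg: "x \<in> carrier_vec n \<Longrightarrow> x \<bullet> (N *\<^sub>v x) \<ge> 0"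
  using N_pd N by (cases "x = 0\<^sub>v n") (auto intro: less_imp_le)

lemma carriers: "\<forall>i\<le>l. q i \<in> carrier_vec n \<and> rr i \<in> carrier_vec n \<and> vv i \<in> carrier_vec m \<and> tt i \<in> carrier_vec n"
proof (induction l)
  case 0
  have q0: "q 0 \<in> carrier_vec n" using init_eqs(2) Ni(1) b by simp
  then show ?case using init_eqs(3-6) Mi(1) A C by auto
next
  case (Suc l)
  have Q: "Qm (Suc l) \<in> carrier_mat n (Suc l)" unfolding Qm_def
    using mat_of_cols_carrier(1)[of n "map q [0..<Suc l]"] by simp
  have gh: "gh l \<in> carrier_vec n" unfolding gh_eq using Ni(1) A Suc.IH by auto
  have hh: "hh l \<in> carrier_vec (Suc l)" unfolding hh_eq using Q N gh
    by (metis carrier_matD(2) carrier_vec_dim_vec dim_mult_mat_vec index_transpose_mat(2))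
  have q: "q (Suc l) \<in> carrier_vec n" unfolding step_eqs(2) using gh hh Q by auto
  have r: "rr (Suc l) \<in> carrier_vec n" unfolding step_eqs(3) using q Suc.IH by auto
  show ?case using Suc.IH q r step_eqs(5,6) Mi(1) A C by (auto simp: le_Suc_eq)
qed

lemma qc[simp]: "q i \<in> carrier_vec n" and rc[simp]: "rr i \<in> carrier_vec n"
  and vc[simp]: "vv i \<in> carrier_vec m" and tc[simp]: "tt i \<in> carrier_vec n"
  using carriers[of i] by auto

lemma Qmc[simp]: "Qm j \<in> carrier_mat n j" unfolding Qm_def
    using mat_of_cols_carrier(1)[of n "map q [0..<j]"] by simp
lemma ghc[simp]: "gh l \<in> carrier_vec n" unfolding gh_eq using Ni(1) A by auto
lemma hhc[simp]: "hh l \<in> carrier_vec (Suc l)" unfolding hh_eq using N Qmc[of "Suc l"] ghc[of l]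
  by (metis carrier_matD(2) carrier_vec_dim_vec dim_mult_mat_vec index_transpose_mat(2))

lemma col_Qm: "c < j \<Longrightarrow> col (Qm j) c = q c"
  unfolding Qm_def by (subst col_mat_of_cols) auto

lemma Qm_sprod: "x \<in> carrier_vec n \<Longrightarrow> y \<in> carrier_vec j \<Longrightarrow> x \<bullet> (Qm j *\<^sub>v y) = (\<Sum>c<j. (q c \<bullet> x) * y $ c)"
  using sprod_mat_vec[OF _ Qmc] col_Qm by simp

lemma QmT: "i < j \<Longrightarrow> x \<in> carrier_vec n \<Longrightarrow> (transpose_mat (Qm j) *\<^sub>v x) $ i = q i \<bullet> x"
proof -
  assume i: "i < j"
  have d2: "dim_col (Qm j) = j" using Qmc[of j] by (rule carrier_matD(2))
  then have d: "dim_row (transpose_mat (Qm j)) = j" "dim_col (Qm j) = j" by auto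
  have "(transpose_mat (Qm j) *\<^sub>v x) $ i = row (transpose_mat (Qm j)) i \<bullet> x"
    using i d by (subst index_mult_mat_vec) auto
  also have "\<dots> = q i \<bullet> x" using i d col_Qm[OF i] by (simp add: row_transpose)
  finally show ?thesis .
qed

lemma hh_idx: "i \<le> l \<Longrightarrow> hh l $ i = q i \<bullet> (N *\<^sub>v gh l)"
  unfolding hh_eq using QmT[of i "Suc l"] N by simp

end

context cset begin

lemma be0_sq: "be 0 * be 0 = b \<bullet> (minv N *\<^sub>v b)" and be0_pos: "be 0 > 0"
proof -
  have p: "b \<bullet> (minv N *\<^sub>v b) > 0" using Ni_pd[OF b b_nz] .
  show "be 0 * be 0 = b \<bullet> (minv N *\<^sub>v b)" unfolding init_eqs(1) gnorm_def using p by simp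
  show "be 0 > 0" unfolding init_eqs(1) gnorm_def using p by simp
qed

lemma be_nz: "Suc l < k \<Longrightarrow> be (Suc l) \<noteq> 0"
  using defined unfolding be_def by auto

lemma Qm_mult_c[simp]: "y \<in> carrier_vec j \<Longrightarrow> Qm j *\<^sub>v y \<in> carrier_vec n"
  by (rule mult_mat_vec_carrier[OF Qmc])

definition "gg l = gh l - Qm (Suc l) *\<^sub>v hh l"
lemma ggc[simp]: "gg l \<in> carrier_vec n" unfolding gg_def using Qmc[of "Suc l"] hhc[of l] by auto

lemma be_sq: "be (Suc l) * be (Suc l) = gg l \<bullet> (N *\<^sub>v gg l)"
  unfolding step_eqs(1) gnorm_def gg_def[symmetric] using N_nonneg[OF ggc[of l]] by simp

lemma q_Suc: "q (Suc l) = (1 / be (Suc l)) \<cdot>\<^sub>v gg l" unfolding gg_def by (rule step_eqs(2))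

lemma sum_delta_vec: "i < j \<Longrightarrow> (\<Sum>c<j. (if c = i then 1 else 0) * (y::real vec) $ c) = y $ i"
  by (simp add: if_distrib[of "\<lambda>x. x * _"] cong: if_cong)

lemma Qm_orth: assumes orth: "\<forall>c<j. q c \<bullet> (N *\<^sub>v q i) = (if c = i then 1 else 0)"
  and i: "i < j" and y: "y \<in> carrier_vec j"
  shows "(Qm j *\<^sub>v y) \<bullet> (N *\<^sub>v q i) = y $ i"
proof -
  have "(Qm j *\<^sub>v y) \<bullet> (N *\<^sub>v q i) = (N *\<^sub>v q i) \<bullet> (Qm j *\<^sub>v y)"
    by (rule comm_scalar_prod[of _ n]) (use N y Qmc[of j] in auto)
  also have "\<dots> = (\<Sum>c<j. (q c \<bullet> (N *\<^sub>v q i)) * y $ c)" using N y by (subst Qm_sprod) auto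
  also have "\<dots> = (\<Sum>c<j. (if c = i then 1 else 0) * y $ c)" using orth by (intro sum.cong) auto
  also have "\<dots> = y $ i" using i by (rule sum_delta_vec)
  finally show ?thesis .
qed

lemma orth: "j \<le> k \<Longrightarrow> \<forall>i<j. \<forall>i'<j. q i \<bullet> (N *\<^sub>v q i') = (if i = i' then 1 else 0)"
proof (induction j)
  case 0 then show ?case by simp
next
  case (Suc j)
  then have IH: "\<forall>i<j. \<forall>i'<j. q i \<bullet> (N *\<^sub>v q i') = (if i = i' then 1 else 0)" by simp
  have new1: "q j \<bullet> (N *\<^sub>v q j) = 1"
  proof (cases j)
    case 0
    have "q 0 \<bullet> (N *\<^sub>v q 0) = (1 / be 0) * (1 / be 0) * ((minv N *\<^sub>v b) \<bullet> (N *\<^sub>v (minv N *\<^sub>v b)))"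
      unfolding init_eqs(2)[symmetric] using N Ni(1) b
      by (simp add: init_eqs(2) mult_mat_vec smult_scalar_prod_distrib scalar_prod_smult_distrib)
    also have "(minv N *\<^sub>v b) \<bullet> (N *\<^sub>v (minv N *\<^sub>v b)) = b \<bullet> (minv N *\<^sub>v b)"
      using N_Ni[OF b] comm_scalar_prod[OF _ b, of "minv N *\<^sub>v b"] Ni(1) b by auto
    finally show ?thesis using 0 Ni_pd[OF b b_nz] be0_sq by simp
  next
    case (Suc l)
    have bnz: "be (Suc l) \<noteq> 0" using be_nz Suc \<open>Suc j \<le> k\<close> by auto
    have "q (Suc l) \<bullet> (N *\<^sub>v q (Suc l)) = (1 / be (Suc l)) * (1 / be (Suc l)) * (gg l \<bullet> (N *\<^sub>v gg l))"
      unfolding q_Suc using N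
      by (simp add: mult_mat_vec smult_scalar_prod_distrib scalar_prod_smult_distrib)
    moreover have "gg l \<bullet> (N *\<^sub>v gg l) \<noteq> 0" using be_sq[of l] bnz by (metis mult_eq_0_iff)
    ultimately show ?thesis using Suc be_sq[of l] bnz by simp
  qed
  have new0: "q j \<bullet> (N *\<^sub>v q i) = 0" if i: "i < j" for i
  proof (cases j)
    case 0 then show ?thesis using i by simp
  next
    case (Suc l)
    have orth_i: "\<forall>c<Suc l. q c \<bullet> (N *\<^sub>v q i) = (if c = i then 1 else 0)" using IH i Suc by auto
    have "gg l \<bullet> (N *\<^sub>v q i) = gh l \<bullet> (N *\<^sub>v q i) - (Qm (Suc l) *\<^sub>v hh l) \<bullet> (N *\<^sub>v q i)"
      unfolding gg_def using N by (subst minus_scalar_prod_distrib[of _ n]) auto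
    also have "(Qm (Suc l) *\<^sub>v hh l) \<bullet> (N *\<^sub>v q i) = hh l $ i"
      using Qm_orth[OF orth_i] i Suc by auto
    also have "hh l $ i = gh l \<bullet> (N *\<^sub>v q i)" using hh_idx[of i l] i Suc N_symm[of "q i" "gh l"] by auto
    finally have "gg l \<bullet> (N *\<^sub>v q i) = 0" by simp
    then show ?thesis unfolding Suc q_Suc using N by (simp add: smult_scalar_prod_distrib)
  qed
  show ?case
  proof (intro allI impI)
    fix i i' assume "i < Suc j" "i' < Suc j"
    then consider "i < j" "i' < j" | "i = j" "i' < j" | "i < j" "i' = j" | "i = j" "i' = j" by linarith
    then show "q i \<bullet> (N *\<^sub>v q i') = (if i = i' then 1 else 0)"
    proof cases
      case 1 then show ?thesis using IH by auto
    next
      case 2 then show ?thesis using new0 by auto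
    next
      case 3 then show ?thesis using new0[of i] N_symm[of "q i" "q j"] by auto
    next
      case 4 then show ?thesis using new1 by auto
    qed
  qed
qed

lemma orthk: "i < k \<Longrightarrow> i' < k \<Longrightarrow> q i \<bullet> (N *\<^sub>v q i') = (if i = i' then 1 else 0)"
  using orth[of k] by auto

end

context cset begin

lemma r_orth: "l < k \<Longrightarrow> \<forall>i. l \<le> i \<and> i < k \<longrightarrow> q i \<bullet> (N *\<^sub>v rr l) = (if i = l then 1 else 0)"
proof (induction l)
  case 0 then show ?case using orthk init_eqs(3) by auto
next
  case (Suc l)
  show ?case
  proof (intro allI impI)
    fix i assume i: "Suc l \<le> i \<and> i < k"
    have "q i \<bullet> (N *\<^sub>v rr (Suc l)) = q i \<bullet> (N *\<^sub>v q (Suc l)) - (be (Suc l) / al l) * (q i \<bullet> (N *\<^sub>v rr l))"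
      unfolding step_eqs(3) using N
      by (simp add: mult_minus_distrib_mat_vec mult_mat_vec scalar_prod_minus_distrib[of _ n])
    also have "q i \<bullet> (N *\<^sub>v rr l) = 0" using Suc i by auto
    finally show "q i \<bullet> (N *\<^sub>v rr (Suc l)) = (if i = Suc l then 1 else 0)" using orthk i Suc by auto
  qed
qed

lemma rr_nz: "l < k \<Longrightarrow> rr l \<noteq> 0\<^sub>v n"
proof
  assume l: "l < k" and "rr l = 0\<^sub>v n"
  then have "q l \<bullet> (N *\<^sub>v rr l) = 0" using N by (simp add: mat_vec_zero)
  then show False using r_orth[OF l] l by auto
qed

definition "wr l = minv M *\<^sub>v (A *\<^sub>v rr l)"
lemma wrc[simp]: "wr l \<in> carrier_vec m" unfolding wr_def using Mi(1) A by auto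

lemma wr_pos: "l < k \<Longrightarrow> wr l \<bullet> (M *\<^sub>v wr l) > 0"
proof -
  assume l: "l < k"
  have "A *\<^sub>v rr l \<noteq> 0\<^sub>v m" using A_inj rr_nz[OF l] by auto
  then have "wr l \<noteq> 0\<^sub>v m" unfolding wr_def using M_Mi[of "A *\<^sub>v rr l"] A M
    by (metis carrier_matD(1) carrier_vec_dim_vec dim_mult_mat_vec mat_vec_zero)
  then show ?thesis using M_pd by auto
qed

lemma al_pos_vt: "l < k \<Longrightarrow> al l = sqrt (wr l \<bullet> (M *\<^sub>v wr l) + rr l \<bullet> (C *\<^sub>v rr l)) \<and> al l > 0 \<and>
   vv l = (1 / al l) \<cdot>\<^sub>v wr l \<and> tt l = (1 / al l) \<cdot>\<^sub>v (C *\<^sub>v rr l)"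
proof (induction l)
  case 0
  have e: "al 0 = sqrt (wr 0 \<bullet> (M *\<^sub>v wr 0) + rr 0 \<bullet> (C *\<^sub>v rr 0))"
    using init_eqs(4) unfolding wr_def init_eqs(3) .
  have "al 0 > 0" unfolding e using wr_pos[OF 0] C_psd by (simp add: add_pos_nonneg)
  then show ?case using e init_eqs(5,6) unfolding wr_def init_eqs(3) by simp
next
  case (Suc l)
  then have IH: "al l > 0" "vv l = (1 / al l) \<cdot>\<^sub>v wr l" by auto
  have w: "minv M *\<^sub>v (A *\<^sub>v q (Suc l)) - be (Suc l) \<cdot>\<^sub>v vv l = wr (Suc l)"
  proof -
    have "wr (Suc l) = minv M *\<^sub>v (A *\<^sub>v q (Suc l) - (be (Suc l) / al l) \<cdot>\<^sub>v (A *\<^sub>v rr l))"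
      unfolding wr_def step_eqs(3) using A by (simp add: mult_minus_distrib_mat_vec mult_mat_vec)
    also have "\<dots> = minv M *\<^sub>v (A *\<^sub>v q (Suc l)) - (be (Suc l) / al l) \<cdot>\<^sub>v wr l"
      unfolding wr_def using A Mi(1) by (simp add: mult_minus_distrib_mat_vec mult_mat_vec)
    also have "\<dots> = minv M *\<^sub>v (A *\<^sub>v q (Suc l)) - be (Suc l) \<cdot>\<^sub>v vv l"
      unfolding IH(2) by (simp add: smult_smult_assoc)
    finally show ?thesis by simp
  qed
  have e: "al (Suc l) = sqrt (wr (Suc l) \<bullet> (M *\<^sub>v wr (Suc l)) + rr (Suc l) \<bullet> (C *\<^sub>v rr (Suc l)))"
    using step_eqs(4)[of l] unfolding w .
  have "al (Suc l) > 0" unfolding e using wr_pos[OF Suc.prems] C_psd by (simp add: add_pos_nonneg)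
  then show ?case using e step_eqs(5,6)[of l] unfolding w by simp
qed

lemma al_pos: "l < k \<Longrightarrow> al l > 0" using al_pos_vt by blast

definition "S = schur M A C"
lemma Sc[simp]: "S \<in> carrier_mat n n" unfolding S_def schur_def using A Mi(1) C by auto
lemma S_mult: "x \<in> carrier_vec n \<Longrightarrow> S *\<^sub>v x = transpose_mat A *\<^sub>v (minv M *\<^sub>v (A *\<^sub>v x)) + C *\<^sub>v x"
  unfolding S_def schur_def using A Mi(1) C
  by (simp add: add_mult_distrib_mat_vec[of _ n n] assoc_mult_mat_vec[of _ n m _ n])

lemma gh_S: "l < k \<Longrightarrow> gh l = (1 / al l) \<cdot>\<^sub>v (minv N *\<^sub>v (S *\<^sub>v rr l))"
proof -
  assume l: "l < k"
  have "gh l = minv N *\<^sub>v ((1 / al l) \<cdot>\<^sub>v (transpose_mat A *\<^sub>v wr l) + (1 / al l) \<cdot>\<^sub>v (C *\<^sub>v rr l))"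
    unfolding gh_eq using al_pos_vt[OF l] A by (simp add: mult_mat_vec)
  also have "\<dots> = minv N *\<^sub>v ((1 / al l) \<cdot>\<^sub>v (S *\<^sub>v rr l))"
    unfolding S_mult[OF rc] wr_def using A C Mi(1) by (subst smult_add_distrib_vec[of _ n]) auto
  also have "\<dots> = (1 / al l) \<cdot>\<^sub>v (minv N *\<^sub>v (S *\<^sub>v rr l))"
    using mult_mat_vec[OF Ni(1) mult_mat_vec_carrier[OF Sc rc]] .
  finally show ?thesis .
qed

lemma S_rr: "l < k \<Longrightarrow> S *\<^sub>v rr l = al l \<cdot>\<^sub>v (N *\<^sub>v gh l)"
proof -
  assume l: "l < k"
  have Sr: "S *\<^sub>v rr l \<in> carrier_vec n" by (rule mult_mat_vec_carrier[OF Sc rc])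
  have "N *\<^sub>v gh l = (1 / al l) \<cdot>\<^sub>v (S *\<^sub>v rr l)" unfolding gh_S[OF l]
    using mult_mat_vec[OF N mult_mat_vec_carrier[OF Ni(1) Sr]] N_Ni[OF Sr] by simp
  then show ?thesis using al_pos[OF l] by (simp add: smult_smult_assoc)
qed

end

context cset begin

definition "Hf i l = q i \<bullet> (N *\<^sub>v gh l)"

lemma Qm_orth2: assumes i: "i < k" and j: "j \<le> k" and y: "y \<in> carrier_vec j"
  shows "(Qm j *\<^sub>v y) \<bullet> (N *\<^sub>v q i) = (if i < j then y $ i else 0)"
proof -
  have "(Qm j *\<^sub>v y) \<bullet> (N *\<^sub>v q i) = (N *\<^sub>v q i) \<bullet> (Qm j *\<^sub>v y)"
    by (rule comm_scalar_prod[of _ n]) (use N y in auto)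
  also have "\<dots> = (\<Sum>c<j. (q c \<bullet> (N *\<^sub>v q i)) * y $ c)" using N y by (subst Qm_sprod) auto
  also have "\<dots> = (\<Sum>c<j. (if c = i then 1 else 0) * y $ c)" using orthk i j by (intro sum.cong) auto
  also have "\<dots> = (if i < j then y $ i else 0)"
    by (simp add: if_distrib[of "\<lambda>x. x * _"] cong: if_cong)
  finally show ?thesis .
qed

lemma gh_decomp: "Suc l < k \<Longrightarrow> gh l = be (Suc l) \<cdot>\<^sub>v q (Suc l) + Qm (Suc l) *\<^sub>v hh l"
proof -
  assume l: "Suc l < k"
  have "be (Suc l) \<cdot>\<^sub>v q (Suc l) = gg l" unfolding q_Suc using be_nz[OF l] by (simp add: smult_smult_assoc)
  then show ?thesis unfolding gg_def using vec_minus_add[OF ghc Qm_mult_c[OF hhc[of l]]] by auto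
qed

lemma Hf_val: assumes i: "i < k" and l: "l < k"
  shows "Hf i l = (if i \<le> l then hh l $ i else if i = Suc l then be (Suc l) else 0)"
proof (cases "i \<le> l")
  case True then show ?thesis unfolding Hf_def using hh_idx by simp
next
  case False
  then have l1: "Suc l < k" using i by simp
  have "Hf i l = gh l \<bullet> (N *\<^sub>v q i)" unfolding Hf_def by (rule N_symm) auto
  also have "\<dots> = (be (Suc l) \<cdot>\<^sub>v q (Suc l) + Qm (Suc l) *\<^sub>v hh l) \<bullet> (N *\<^sub>v q i)"
    using gh_decomp[OF l1] by simp
  also have "\<dots> = be (Suc l) * (q (Suc l) \<bullet> (N *\<^sub>v q i)) + (Qm (Suc l) *\<^sub>v hh l) \<bullet> (N *\<^sub>v q i)"
    using N by (subst add_scalar_prod_distrib[of _ n]) auto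
  also have "\<dots> = (if i = Suc l then be (Suc l) else 0)"
    using orthk[OF l1 i] Qm_orth2[OF i, of "Suc l" "hh l"] l1 False by auto
  finally show ?thesis using False by simp
qed

definition "Hk = nscraig_H M A C N b k"
definition "Bk = nscraig_B M A C N b k"
definition "Qk = nscraig_Q M A C N b k"

lemma Hkc[simp]: "Hk \<in> carrier_mat k k" unfolding Hk_def nscraig_H_def by simp
lemma Bkc[simp]: "Bk \<in> carrier_mat k k" unfolding Bk_def nscraig_B_def by simp
lemma Qk_eq: "Qk = Qm k"
proof -
  have "k = Suc (k - 1)" using k by simp
  then have "craig_state M A C N b k = st (Suc (k - 1))" unfolding st_def by simp
  then show ?thesis unfolding Qk_def nscraig_Q_def Qm_def craig_Q_def
    using st_struct[of "k - 1"] b \<open>k = Suc (k - 1)\<close> by (simp del: upt_Suc)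
qed

lemma Hk_idx: "i < k \<Longrightarrow> l < k \<Longrightarrow> Hk $$ (i, l) = Hf i l"
  unfolding Hk_def nscraig_H_def using Hf_val hh_def st_def be_def
  by (simp add: hh_def st_def be_def)

lemma Bk_idx: "j < k \<Longrightarrow> l < k \<Longrightarrow> Bk $$ (j, l) = (if j = l then al l else 0) + (if Suc j = l then be l else 0)"
  unfolding Bk_def nscraig_B_def by (auto simp: al_def be_def)

lemma HB_idx: assumes i: "i < k" and l: "l < k"
  shows "(Hk * Bk) $$ (i, l) = Hf i l * al l + (if l = 0 then 0 else Hf i (l - 1) * be l)"
proof -
  have dH: "dim_row Hk = k" "dim_col Hk = k" using carrier_matD[OF Hkc] by auto
  have dB: "dim_row Bk = k" "dim_col Bk = k" using carrier_matD[OF Bkc] by auto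
  have "(Hk * Bk) $$ (i, l) = row Hk i \<bullet> col Bk l" using i l dH dB by (subst index_mult_mat) auto
  also have "\<dots> = (\<Sum>j<k. Hk $$ (i, j) * Bk $$ (j, l))"
    unfolding scalar_prod_def using i l dH dB by (auto simp: atLeast0LessThan intro: sum.cong)
  finally have "(Hk * Bk) $$ (i, l) = (\<Sum>j<k. Hk $$ (i, j) * Bk $$ (j, l))" .
  also have "\<dots> = (\<Sum>j<k. Hf i j * ((if j = l then al l else 0) + (if Suc j = l then be l else 0)))"
    using i l by (intro sum.cong) (auto simp: Hk_idx Bk_idx)
  also have "\<dots> = (\<Sum>j<k. (if j = l then Hf i j * al l else 0)) + (\<Sum>j<k. (if Suc j = l then Hf i j * be l else 0))"
    by (simp add: distrib_left sum.distrib if_distrib[of "\<lambda>x. _ * x"] cong: if_cong)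
  also have "\<dots> = Hf i l * al l + (if l = 0 then 0 else Hf i (l - 1) * be l)"
  proof -
    have "(\<Sum>j<k. (if Suc j = l then Hf i j * be l else 0)) = (if l = 0 then 0 else Hf i (l - 1) * be l)"
    proof (cases l)
      case 0 then show ?thesis by simp
    next
      case (Suc l') then show ?thesis using l by (simp add: sum.delta')
    qed
    then show ?thesis using l by (simp add: sum.delta')
  qed
  finally show ?thesis .
qed

lemma qSq: assumes i: "i < k" and l: "l < k"
  shows "q i \<bullet> (S *\<^sub>v q l) = Hf i l * al l + (if l = 0 then 0 else Hf i (l - 1) * be l)"
proof (cases l)
  case 0
  have "q i \<bullet> (S *\<^sub>v q l) = q i \<bullet> (al 0 \<cdot>\<^sub>v (N *\<^sub>v gh 0))" using 0 init_eqs(3) S_rr[OF l] by simp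
  also have "\<dots> = al 0 * Hf i 0" unfolding Hf_def using N by (simp add: scalar_prod_smult_distrib[of _ n])
  finally show ?thesis using 0 by (simp add: mult.commute)
next
  case (Suc l')
  have ql: "q l = rr l + (be l / al l') \<cdot>\<^sub>v rr l'" unfolding Suc step_eqs(3)
    using vec_minus_add[of "q (Suc l')" n] by simp
  have l': "l' < k" using l Suc by simp
  have "S *\<^sub>v q l = al l \<cdot>\<^sub>v (N *\<^sub>v gh l) + (be l / al l') \<cdot>\<^sub>v (al l' \<cdot>\<^sub>v (N *\<^sub>v gh l'))"
    unfolding ql using S_rr[OF l] S_rr[OF l'] by (simp add: mult_add_distrib_mat_vec[OF Sc] mult_mat_vec[OF Sc])
  also have "\<dots> = al l \<cdot>\<^sub>v (N *\<^sub>v gh l) + be l \<cdot>\<^sub>v (N *\<^sub>v gh l')"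
    using al_pos[OF l'] by (simp add: smult_smult_assoc)
  finally have "q i \<bullet> (S *\<^sub>v q l) = al l * Hf i l + be l * Hf i l'"
    unfolding Hf_def using N by (simp add: scalar_prod_add_distrib[of _ n] scalar_prod_smult_distrib[of _ n])
  then show ?thesis using Suc by (simp add: mult.commute)
qed

definition "G = Hk * Bk"
lemma Gc[simp]: "G \<in> carrier_mat k k" unfolding G_def using Hkc Bkc by (rule mult_carrier_mat)

lemma G_idx: "i < k \<Longrightarrow> l < k \<Longrightarrow> G $$ (i, l) = q i \<bullet> (S *\<^sub>v q l)"
  unfolding G_def using HB_idx qSq by simp

lemma G_eq: "G = transpose_mat (Qm k) * (S * Qm k)"
proof (rule eq_matI)
  fix i l assume i: "i < dim_row (transpose_mat (Qm k) * (S * Qm k))" and l: "l < dim_col (transpose_mat (Qm k) * (S * Qm k))"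
  have d: "dim_col (Qm k) = k" using Qmc[of k] by (rule carrier_matD(2))
  have ik: "i < k" "l < k" using i l d by auto
  have "(transpose_mat (Qm k) * (S * Qm k)) $$ (i, l) = row (transpose_mat (Qm k)) i \<bullet> col (S * Qm k) l"
    using i l by (subst index_mult_mat) auto
  also have "\<dots> = q i \<bullet> (S *\<^sub>v q l)" using ik d col_Qm[of i k] col_Qm[of l k]
    by (simp add: row_transpose col_mult2[OF Sc Qmc])
  finally show "G $$ (i, l) = (transpose_mat (Qm k) * (S * Qm k)) $$ (i, l)" using G_idx ik by simp
qed (auto simp: carrier_matD[OF Gc] carrier_matD[OF Qmc[of k]])

end

context cset begin

lemma S_pd: assumes x: "x \<in> carrier_vec n" "x \<noteq> 0\<^sub>v n" shows "x \<bullet> (S *\<^sub>v x) > 0"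
proof -
  let ?z = "minv M *\<^sub>v (A *\<^sub>v x)"
  have Ax: "A *\<^sub>v x \<in> carrier_vec m" using A x by auto
  have z: "?z \<in> carrier_vec m" using Mi(1) Ax by auto
  have Ax0: "A *\<^sub>v x \<noteq> 0\<^sub>v m" using A_inj x by auto
  have "x \<bullet> (transpose_mat A *\<^sub>v ?z) = (transpose_mat A *\<^sub>v ?z) \<bullet> x"
    by (rule comm_scalar_prod[of _ n]) (use x A z in auto)
  also have "\<dots> = ?z \<bullet> (A *\<^sub>v x)" using transpose_vec_mult_scalar[OF A x(1) z] .
  also have "\<dots> = (A *\<^sub>v x) \<bullet> ?z" by (rule comm_scalar_prod[OF z Ax])
  finally have e: "x \<bullet> (transpose_mat A *\<^sub>v ?z) = (A *\<^sub>v x) \<bullet> ?z" .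
  have "x \<bullet> (S *\<^sub>v x) = x \<bullet> (transpose_mat A *\<^sub>v ?z) + x \<bullet> (C *\<^sub>v x)"
    unfolding S_mult[OF x(1)] using x A z C by (subst scalar_prod_add_distrib[of _ n]) auto
  also have "\<dots> = (A *\<^sub>v x) \<bullet> ?z + x \<bullet> (C *\<^sub>v x)" using e by simp
  finally show ?thesis using Mi_pd[OF Ax Ax0] C_psd[rule_format, OF x(1)] by simp
qed

lemma Qm_inj: assumes y: "y \<in> carrier_vec k" and Q0: "Qm k *\<^sub>v y = 0\<^sub>v n" shows "y = 0\<^sub>v k"
proof (rule eq_vecI)
  fix i assume "i < dim_vec (0\<^sub>v k)"
  then have i: "i < k" by simp
  have "y $ i = (Qm k *\<^sub>v y) \<bullet> (N *\<^sub>v q i)" using Qm_orth2[OF i _ y] i by simp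
  also have "\<dots> = 0" unfolding Q0 using N by simp
  finally show "y $ i = 0\<^sub>v k $ i" using i by simp
qed (use y in simp)

lemma QTc[simp]: "transpose_mat (Qm k) \<in> carrier_mat k n" using Qmc[of k] by simp
lemma QT_mult_c[simp]: "z \<in> carrier_vec n \<Longrightarrow> transpose_mat (Qm k) *\<^sub>v z \<in> carrier_vec k"
  by (rule mult_mat_vec_carrier[OF QTc])
lemma S_mult_c[simp]: "z \<in> carrier_vec n \<Longrightarrow> S *\<^sub>v z \<in> carrier_vec n"
  by (rule mult_mat_vec_carrier[OF Sc])

lemma G_mult: "y \<in> carrier_vec k \<Longrightarrow> G *\<^sub>v y = transpose_mat (Qm k) *\<^sub>v (S *\<^sub>v (Qm k *\<^sub>v y))"
proof -
  assume y: "y \<in> carrier_vec k"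
  have SQ: "S * Qm k \<in> carrier_mat n k" by (rule mult_carrier_mat[OF Sc Qmc])
  have "G *\<^sub>v y = transpose_mat (Qm k) *\<^sub>v ((S * Qm k) *\<^sub>v y)" unfolding G_eq
    by (rule assoc_mult_mat_vec[OF QTc SQ y])
  also have "(S * Qm k) *\<^sub>v y = S *\<^sub>v (Qm k *\<^sub>v y)" by (rule assoc_mult_mat_vec[OF Sc Qmc y])
  finally show ?thesis .
qed

lemma QmT_sprod: "y \<in> carrier_vec k \<Longrightarrow> z \<in> carrier_vec n \<Longrightarrow> y \<bullet> (transpose_mat (Qm k) *\<^sub>v z) = (Qm k *\<^sub>v y) \<bullet> z"
proof -
  assume y: "y \<in> carrier_vec k" and z: "z \<in> carrier_vec n"
  have "y \<bullet> (transpose_mat (Qm k) *\<^sub>v z) = (transpose_mat (Qm k) *\<^sub>v z) \<bullet> y"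
    by (rule comm_scalar_prod[of _ k]) (use y z Qmc[of k] in auto)
  also have "\<dots> = z \<bullet> (Qm k *\<^sub>v y)" by (rule transpose_vec_mult_scalar[OF Qmc y z])
  also have "\<dots> = (Qm k *\<^sub>v y) \<bullet> z" by (rule comm_scalar_prod[OF z]) (use y in auto)
  finally show ?thesis .
qed

lemma G_pd: assumes y: "y \<in> carrier_vec k" "y \<noteq> 0\<^sub>v k" shows "y \<bullet> (G *\<^sub>v y) > 0"
proof -
  let ?x = "Qm k *\<^sub>v y"
  have x: "?x \<in> carrier_vec n" using y by simp
  have x0: "?x \<noteq> 0\<^sub>v n" using Qm_inj y by blast
  have "y \<bullet> (G *\<^sub>v y) = ?x \<bullet> (S *\<^sub>v ?x)" unfolding G_mult[OF y(1)]
    by (rule QmT_sprod[OF y(1)]) (use x in simp)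
  then show ?thesis using S_pd[OF x x0] by simp
qed

lemma G_inj: "y \<in> carrier_vec k \<Longrightarrow> G *\<^sub>v y = 0\<^sub>v k \<Longrightarrow> y = 0\<^sub>v k"
  using G_pd by (metis less_irrefl scalar_prod_right_zero)

lemma detG: "det G \<noteq> 0" using det_0_iff_vec_prod_zero[OF Gc] G_inj by blast

lemma detHB: "det Hk \<noteq> 0" "det Bk \<noteq> 0"
  using detG unfolding G_def det_mult[OF Hkc Bkc] by auto

lemma Hi: "minv Hk \<in> carrier_mat k k" "Hk * minv Hk = 1\<^sub>m k" "minv Hk * Hk = 1\<^sub>m k"
  using minv_ok_det[OF Hkc detHB(1)] by auto
lemma Bi: "minv Bk \<in> carrier_mat k k" "Bk * minv Bk = 1\<^sub>m k" "minv Bk * Bk = 1\<^sub>m k"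
  using minv_ok_det[OF Bkc detHB(2)] by auto

lemma Hk_invertible: "invertible_mat Hk"
  unfolding invertible_mat_def inverts_mat_def square_mat.simps
  using Hi carrier_matD[OF Hkc] carrier_matD[OF Hi(1)] by metis

definition "e0 = be 0 \<cdot>\<^sub>v unit_vec k 0"
lemma e0c[simp]: "e0 \<in> carrier_vec k" unfolding e0_def by simp

definition "yk = nscraig_y M A C N b k"
lemma yk_eq: "yk = - (minv Bk *\<^sub>v (minv Hk *\<^sub>v e0))"
  unfolding yk_def nscraig_y_def e0_def Hk_def Bk_def be_def by simp
lemma ykc[simp]: "yk \<in> carrier_vec k" unfolding yk_eq using Hi(1) Bi(1) by simp

lemma G_yk: "G *\<^sub>v yk = - e0"
proof -
  have w: "minv Hk *\<^sub>v e0 \<in> carrier_vec k" using Hi(1) by simp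
  have w2: "minv Bk *\<^sub>v (minv Hk *\<^sub>v e0) \<in> carrier_vec k" using Bi(1) w by simp
  have "Bk *\<^sub>v yk = - (minv Hk *\<^sub>v e0)"
    unfolding yk_eq mat_vec_uminus[OF Bkc w2] mat_inv_vec[OF Bkc Bi(1,2) w] ..
  then have "G *\<^sub>v yk = Hk *\<^sub>v (- (minv Hk *\<^sub>v e0))" unfolding G_def
    using assoc_mult_mat_vec[OF Hkc Bkc ykc] by simp
  also have "\<dots> = - e0" unfolding mat_vec_uminus[OF Hkc w] mat_inv_vec[OF Hkc Hi(1,2) e0c] ..
  finally show ?thesis .
qed

lemma b_eq: "b = be 0 \<cdot>\<^sub>v (N *\<^sub>v q 0)"
  unfolding init_eqs(2) using N Ni(1) b be0_pos
  by (simp add: mult_mat_vec[of _ n n] N_Ni smult_smult_assoc)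

lemma QmT_b: "transpose_mat (Qm k) *\<^sub>v b = e0"
proof (rule eq_vecI)
  have d: "dim_col (Qm k) = k" using Qmc[of k] by (rule carrier_matD(2))
  fix i assume "i < dim_vec e0"
  then have i: "i < k" unfolding e0_def by simp
  have "(transpose_mat (Qm k) *\<^sub>v b) $ i = q i \<bullet> b" using QmT[OF i b] .
  also have "\<dots> = q i \<bullet> (be 0 \<cdot>\<^sub>v (N *\<^sub>v q 0))" by (rule arg_cong[OF b_eq])
  also have "\<dots> = be 0 * (q i \<bullet> (N *\<^sub>v q 0))" using N by (simp add: scalar_prod_smult_distrib[of _ n])
  also have "\<dots> = e0 $ i" unfolding e0_def using orthk[OF i] i k by simp
  finally show "(transpose_mat (Qm k) *\<^sub>v b) $ i = e0 $ i" .
qed (use carrier_matD[OF Qmc[of k]] in \<open>simp add: e0_def\<close>)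

end


lemma pow_mat_Suc': assumes A: "(A::real mat) \<in> carrier_mat d d" shows "A ^\<^sub>m Suc i = A * A ^\<^sub>m i"
proof (induction i)
  case 0 then show ?case using A by simp
next
  case (Suc i)
  have "A ^\<^sub>m Suc (Suc i) = (A * A ^\<^sub>m i) * A" using Suc by simp
  also have "\<dots> = A * (A ^\<^sub>m i * A)" using A by (simp add: assoc_mult_mat[of _ d d _ d _ d])
  finally show ?case by simp
qed

context vec_space
begin

lemma span_minus: "U \<subseteq> carrier_vec n \<Longrightarrow> v \<in> span U \<Longrightarrow> w \<in> span U \<Longrightarrow> v - w \<in> span U"
proof -
  assume U: "U \<subseteq> carrier_vec n" and v: "v \<in> span U" and w: "w \<in> span U"
  have vc: "v \<in> carrier_vec n" "w \<in> carrier_vec n" using span_is_subset2[OF U] v w by auto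
  have "v + (-1) \<cdot>\<^sub>v w \<in> span U" using span_add1[OF U v smult_in_span[OF U w]] .
  moreover have "v + (-1) \<cdot>\<^sub>v w = v - w" using vc by (intro eq_vecI) auto
  ultimately show ?thesis by simp
qed

lemma span_image: assumes P: "P \<in> carrier_mat n n" and X: "X \<subseteq> carrier_vec n" and Y: "Y \<subseteq> carrier_vec n"
  and gen: "\<forall>x\<in>X. P *\<^sub>v x \<in> span Y" and x: "x \<in> span X"
  shows "P *\<^sub>v x \<in> span Y"
proof -
  let ?W = "{x \<in> carrier_vec n. P *\<^sub>v x \<in> span Y}"
  have sub: "LinearCombinations.submodule class_ring ?W V"
    unfolding submodule_def
  proof (intro conjI allI impI)
    show "module class_ring V" by (rule module_axioms)
    show "?W \<subseteq> carrier V" by auto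
    fix v w assume "v \<in> ?W" "w \<in> ?W"
    then show "v \<oplus>\<^bsub>V\<^esub> w \<in> ?W" using P span_add1[OF Y] by (auto simp: mult_add_distrib_mat_vec[OF P])
  next
    have "0\<^sub>v n \<in> span Y" using span_is_submodule[OF Y] unfolding submodule_def by auto
    then show "\<zero>\<^bsub>V\<^esub> \<in> ?W" using P by (auto simp: mat_vec_zero)
  next
    fix c :: 'a and v assume "c \<in> carrier class_ring" "v \<in> ?W"
    then show "c \<odot>\<^bsub>V\<^esub> v \<in> ?W" using P smult_in_span[OF Y] by (auto simp: mult_mat_vec[OF P])
  qed
  have "span X \<subseteq> ?W" by (rule span_is_subset[OF _ sub]) (use X gen in auto)
  then show ?thesis using x by auto
qed

end

sublocale cset \<subseteq> VS: vec_space "TYPE(real)" n .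

context cset begin

definition "P = minv N * S"
lemma Pc[simp]: "P \<in> carrier_mat n n" unfolding P_def using Ni(1) Sc by simp
definition "Kg i = (P ^\<^sub>m i) *\<^sub>v (minv N *\<^sub>v b)"
lemma Kgc[simp]: "Kg i \<in> carrier_vec n" unfolding Kg_def
  using mult_mat_vec_carrier[OF pow_carrier_mat[OF Pc] mult_mat_vec_carrier[OF Ni(1) b]] .
lemma Kg_Suc: "Kg (Suc i) = P *\<^sub>v Kg i"
  unfolding Kg_def pow_mat_Suc'[OF Pc] using Ni(1) b
  by (simp add: assoc_mult_mat_vec[of _ n n _ n])
lemma P_mult: "x \<in> carrier_vec n \<Longrightarrow> P *\<^sub>v x = minv N *\<^sub>v (S *\<^sub>v x)"
  unfolding P_def using Ni(1) by (simp add: assoc_mult_mat_vec[of _ n n _ n])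

lemma krylov_eq: "krylov N (schur M A C) b k = VS.span (Kg ` {0..<k})"
  unfolding krylov_def Kg_def P_def S_def using b by simp

lemma P_q: assumes l: "l < k"
  shows "P *\<^sub>v q l = al l \<cdot>\<^sub>v gh l + (if l = 0 then 0\<^sub>v n else be l \<cdot>\<^sub>v gh (l - 1))"
proof (cases l)
  case 0
  then show ?thesis unfolding P_mult[OF qc] using S_rr[OF l] init_eqs(3) Ni(1) N
    by (simp add: mult_mat_vec[of _ n n] N_Ni assoc_mult_mat_vec[symmetric, of _ n n _ n] Ni(3))
next
  case (Suc l')
  have ql: "q l = rr l + (be l / al l') \<cdot>\<^sub>v rr l'" unfolding Suc step_eqs(3)
    using vec_minus_add[of "q (Suc l')" n] by simp
  have l': "l' < k" using l Suc by simp
  have "S *\<^sub>v q l = al l \<cdot>\<^sub>v (N *\<^sub>v gh l) + (be l / al l') \<cdot>\<^sub>v (al l' \<cdot>\<^sub>v (N *\<^sub>v gh l'))"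
    unfolding ql using S_rr[OF l] S_rr[OF l'] by (simp add: mult_add_distrib_mat_vec[OF Sc] mult_mat_vec[OF Sc])
  also have "\<dots> = N *\<^sub>v (al l \<cdot>\<^sub>v gh l + be l \<cdot>\<^sub>v gh l')"
    using al_pos[OF l'] N by (simp add: smult_smult_assoc mult_add_distrib_mat_vec[OF N] mult_mat_vec[OF N])
  finally have "P *\<^sub>v q l = minv N *\<^sub>v (N *\<^sub>v (al l \<cdot>\<^sub>v gh l + be l \<cdot>\<^sub>v gh l'))" unfolding P_mult[OF qc] by simp
  also have "\<dots> = al l \<cdot>\<^sub>v gh l + be l \<cdot>\<^sub>v gh l'" by (rule mat_inv_vec[OF Ni(1) N Ni(3)]) simp
  finally show ?thesis using Suc by simp
qed

end

context cset begin

definition "VV j = VS.span (q ` {0..<j})"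
definition "KK j = VS.span (Kg ` {0..<j})"
lemma qset: "q ` X \<subseteq> carrier_vec n" by auto
lemma Kgset: "Kg ` X \<subseteq> carrier_vec n" by auto

lemma VV_Qm: "VV j = {x. \<exists>z\<in>carrier_vec j. x = Qm j *\<^sub>v z}"
proof -
  have cols: "cols (Qm j) = map q [0..<j]" unfolding Qm_def by (rule cols_mat_of_cols) auto
  have "VV j = VS.col_space (Qm j)" unfolding VV_def VS.col_space_def cols by simp
  also have "\<dots> = {y \<in> carrier_vec n. \<exists>x\<in>carrier_vec j. Qm j *\<^sub>v x = y}"
    using VS.col_space_eq[OF Qmc[of j]] carrier_matD[OF Qmc[of j]] by simp
  also have "\<dots> = {x. \<exists>z\<in>carrier_vec j. x = Qm j *\<^sub>v z}" by auto
  finally show ?thesis .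
qed

lemma q_in_VV: "i < j \<Longrightarrow> q i \<in> VV j"
  unfolding VV_def using VS.in_own_span[OF qset[of "{0..<j}"]] by auto
lemma VV_mono: "j \<le> j' \<Longrightarrow> VV j \<subseteq> VV j'"
  unfolding VV_def by (rule VS.span_is_monotone) auto
lemma Qm_in_VV: "y \<in> carrier_vec j \<Longrightarrow> Qm j *\<^sub>v y \<in> VV j" unfolding VV_Qm by auto
lemma Kg_in_KK: "i < j \<Longrightarrow> Kg i \<in> KK j"
  unfolding KK_def using VS.in_own_span[OF Kgset[of "{0..<j}"]] by auto
lemma KK_mono: "j \<le> j' \<Longrightarrow> KK j \<subseteq> KK j'"
  unfolding KK_def by (rule VS.span_is_monotone) auto
lemma VV_add: "x \<in> VV j \<Longrightarrow> y \<in> VV j \<Longrightarrow> x + y \<in> VV j"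
  unfolding VV_def by (rule VS.span_add1[OF qset])
lemma VV_minus: "x \<in> VV j \<Longrightarrow> y \<in> VV j \<Longrightarrow> x - y \<in> VV j"
  unfolding VV_def by (rule VS.span_minus[OF qset])
lemma VV_smult: "x \<in> VV j \<Longrightarrow> c \<cdot>\<^sub>v x \<in> VV j"
  unfolding VV_def by (rule VS.smult_in_span[OF qset])
lemma KK_add: "x \<in> KK j \<Longrightarrow> y \<in> KK j \<Longrightarrow> x + y \<in> KK j"
  unfolding KK_def by (rule VS.span_add1[OF Kgset])
lemma KK_minus: "x \<in> KK j \<Longrightarrow> y \<in> KK j \<Longrightarrow> x - y \<in> KK j"
  unfolding KK_def by (rule VS.span_minus[OF Kgset])
lemma KK_smult: "x \<in> KK j \<Longrightarrow> c \<cdot>\<^sub>v x \<in> KK j"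
  unfolding KK_def by (rule VS.smult_in_span[OF Kgset])

lemma rr_in: "rr l \<in> VV (Suc l)"
proof (induction l)
  case 0 then show ?case using q_in_VV init_eqs(3) by simp
next
  case (Suc l)
  have "rr l \<in> VV (Suc (Suc l))" using Suc VV_mono[of "Suc l" "Suc (Suc l)"] by auto
  then show ?case unfolding step_eqs(3) by (intro VV_minus VV_smult q_in_VV) auto
qed

lemma gh_in: "Suc l < k \<Longrightarrow> gh l \<in> VV (Suc (Suc l))"
  unfolding gh_decomp
  by (intro VV_add VV_smult q_in_VV) (use Qm_in_VV[OF hhc[of l]] VV_mono[of "Suc l" "Suc (Suc l)"] in auto)

lemma P_VV: assumes l: "Suc l < k" and x: "x \<in> VV (Suc l)" shows "P *\<^sub>v x \<in> VV (Suc (Suc l))"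
proof -
  have "\<forall>y\<in>q ` {0..<Suc l}. P *\<^sub>v y \<in> VV (Suc (Suc l))"
  proof
    fix y assume "y \<in> q ` {0..<Suc l}"
    then obtain i where i0: "i < Suc l" and y: "y = q i" by auto
    then have i: "i \<le> l" by simp
    have ik: "i < k" using i l by simp
    have g1: "gh i \<in> VV (Suc (Suc l))" using gh_in[of i] i l VV_mono[of "Suc (Suc i)" "Suc (Suc l)"] by auto
    have g2: "i \<noteq> 0 \<Longrightarrow> gh (i - 1) \<in> VV (Suc (Suc l))"
      using gh_in[of "i - 1"] i l VV_mono[of "Suc i" "Suc (Suc l)"] by auto
    have z: "0\<^sub>v n \<in> VV (Suc (Suc l))"
      using Qm_in_VV[of "0\<^sub>v (Suc (Suc l))" "Suc (Suc l)"] mat_vec_zero[OF Qmc[of "Suc (Suc l)"]] by simp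
    show "P *\<^sub>v y \<in> VV (Suc (Suc l))" unfolding y P_q[OF ik]
      using g1 g2 z by (auto intro!: VV_add VV_smult)
  qed
  then show ?thesis using VS.span_image[OF Pc qset qset] x unfolding VV_def by blast
qed

lemma P_KK: assumes x: "x \<in> KK j" shows "P *\<^sub>v x \<in> KK (Suc j)"
proof -
  have "\<forall>y\<in>Kg ` {0..<j}. P *\<^sub>v y \<in> KK (Suc j)"
    using Kg_in_KK by (auto simp: Kg_Suc[symmetric])
  then show ?thesis using VS.span_image[OF Pc Kgset Kgset] x unfolding KK_def by blast
qed

lemma span_sub_VV: "X \<subseteq> carrier_vec n \<Longrightarrow> X \<subseteq> VV j \<Longrightarrow> VS.span X \<subseteq> VV j"
  unfolding VV_def by (rule VS.span_subsetI[OF qset])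
lemma span_sub_KK: "X \<subseteq> carrier_vec n \<Longrightarrow> X \<subseteq> KK j \<Longrightarrow> VS.span X \<subseteq> KK j"
  unfolding KK_def by (rule VS.span_subsetI[OF Kgset])

lemma K_eq_V: "j \<le> k \<Longrightarrow> KK j = VV j"
proof (induction j)
  case 0 then show ?case unfolding KK_def VV_def by simp
next
  case (Suc j)
  then have IH: "KK j = VV j" by simp
  have newK: "Kg j \<in> VV (Suc j)"
  proof (cases j)
    case 0
    have "Kg 0 = be 0 \<cdot>\<^sub>v q 0" unfolding Kg_def init_eqs(2) using Ni(1) b be0_pos carrier_matD[OF Pc]
      by (simp add: smult_smult_assoc)
    then show ?thesis using 0 by (auto intro!: VV_smult q_in_VV)
  next
    case (Suc l)
    have "Kg l \<in> VV (Suc l)" using Kg_in_KK[of l "Suc l"] IH Suc by simp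
    then show ?thesis unfolding Suc Kg_Suc using P_VV \<open>Suc j \<le> k\<close> Suc by simp
  qed
  have newV: "q j \<in> KK (Suc j)"
  proof (cases j)
    case 0
    have "q 0 = (1 / be 0) \<cdot>\<^sub>v Kg 0" unfolding Kg_def init_eqs(2) using Ni(1) b carrier_matD[OF Pc] by simp
    then show ?thesis using 0 by (auto intro!: KK_smult Kg_in_KK)
  next
    case (Suc l)
    have lk: "l < k" "Suc l < k" using Suc \<open>Suc j \<le> k\<close> by auto
    have r: "rr l \<in> KK (Suc l)" using rr_in[of l] IH Suc by simp
    have g: "gh l \<in> KK (Suc (Suc l))" unfolding gh_S[OF lk(1)] P_mult[OF rc, symmetric]
      by (intro KK_smult P_KK r)
    have h: "Qm (Suc l) *\<^sub>v hh l \<in> KK (Suc (Suc l))"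
      using Qm_in_VV[OF hhc[of l]] IH Suc KK_mono[of "Suc l" "Suc (Suc l)"] by auto
    show ?thesis unfolding Suc q_Suc gg_def using g h by (intro KK_smult KK_minus) (auto simp: Suc)
  qed
  have sub1: "KK (Suc j) \<subseteq> VV (Suc j)" unfolding KK_def
  proof (rule span_sub_VV[OF Kgset], rule)
    fix y assume "y \<in> Kg ` {0..<Suc j}"
    then obtain i where i0: "i < Suc j" "y = Kg i" by auto
    then have i: "i \<le> j" "y = Kg i" by auto
    show "y \<in> VV (Suc j)"
    proof (cases "i = j")
      case True then show ?thesis using newK i by simp
    next
      case False then show ?thesis using Kg_in_KK[of i j] IH VV_mono[of j "Suc j"] i by auto
    qed
  qed
  have sub2: "VV (Suc j) \<subseteq> KK (Suc j)" unfolding VV_def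
  proof (rule span_sub_KK[OF qset], rule)
    fix y assume "y \<in> q ` {0..<Suc j}"
    then obtain i where i0: "i < Suc j" "y = q i" by auto
    then have i: "i \<le> j" "y = q i" by auto
    show "y \<in> KK (Suc j)"
    proof (cases "i = j")
      case True then show ?thesis using newV i by simp
    next
      case False then show ?thesis using q_in_VV[of i j] IH KK_mono[of j "Suc j"] i by auto
    qed
  qed
  show ?case using sub1 sub2 by auto
qed

lemma krylov_Qm: "krylov N (schur M A C) b k = {x. \<exists>z\<in>carrier_vec k. x = Qm k *\<^sub>v z}"
  using krylov_eq K_eq_V[of k] VV_Qm[of k] unfolding KK_def by simp

end

context cset begin

lemma G_mult_c[simp]: "y \<in> carrier_vec k \<Longrightarrow> G *\<^sub>v y \<in> carrier_vec k"
  by (rule mult_mat_vec_carrier[OF Gc])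

definition "pk = nscraig_p M A C N b k"
lemma pk_eq: "pk = Qm k *\<^sub>v yk" unfolding pk_def nscraig_p_def yk_def Qk_eq[unfolded Qk_def] ..

lemma resid: assumes z: "z \<in> carrier_vec k"
  shows "transpose_mat (Qm k) *\<^sub>v (- b - S *\<^sub>v (Qm k *\<^sub>v z)) = - e0 - G *\<^sub>v z"
proof -
  have x: "S *\<^sub>v (Qm k *\<^sub>v z) \<in> carrier_vec n" using z by simp
  have "transpose_mat (Qm k) *\<^sub>v (- b - S *\<^sub>v (Qm k *\<^sub>v z)) =
        transpose_mat (Qm k) *\<^sub>v (- b) - transpose_mat (Qm k) *\<^sub>v (S *\<^sub>v (Qm k *\<^sub>v z))"
    by (rule mult_minus_distrib_mat_vec[OF QTc]) (use b x in auto)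
  also have "transpose_mat (Qm k) *\<^sub>v (- b) = - e0" using mat_vec_uminus[OF QTc b] QmT_b by simp
  also have "transpose_mat (Qm k) *\<^sub>v (S *\<^sub>v (Qm k *\<^sub>v z)) = G *\<^sub>v z" using G_mult[OF z] by simp
  finally show ?thesis .
qed

lemma resid_orth: assumes z: "z \<in> carrier_vec k" and x: "x \<in> carrier_vec k"
  shows "(- b - S *\<^sub>v (Qm k *\<^sub>v z)) \<bullet> (Qm k *\<^sub>v x) = x \<bullet> (- e0 - G *\<^sub>v z)"
proof -
  have r: "- b - S *\<^sub>v (Qm k *\<^sub>v z) \<in> carrier_vec n" using b z by simp
  have "(- b - S *\<^sub>v (Qm k *\<^sub>v z)) \<bullet> (Qm k *\<^sub>v x) = (Qm k *\<^sub>v x) \<bullet> (- b - S *\<^sub>v (Qm k *\<^sub>v z))"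
    by (rule comm_scalar_prod[OF r]) (use x in simp)
  also have "\<dots> = x \<bullet> (transpose_mat (Qm k) *\<^sub>v (- b - S *\<^sub>v (Qm k *\<^sub>v z)))" using QmT_sprod[OF x r] by simp
  finally show ?thesis unfolding resid[OF z] .
qed

lemma main:
  shows "invertible_mat Hk"
    and "pk \<in> krylov N (schur M A C) b k"
    and "\<forall>x \<in> krylov N (schur M A C) b k. (- b - S *\<^sub>v pk) \<bullet> x = 0"
    and "\<forall>p' \<in> krylov N (schur M A C) b k.
          (\<forall>x \<in> krylov N (schur M A C) b k. (- b - S *\<^sub>v p') \<bullet> x = 0) \<longrightarrow> p' = pk"
proof -
  show "invertible_mat Hk" by (rule Hk_invertible)
  show "pk \<in> krylov N (schur M A C) b k" unfolding krylov_Qm pk_eq using ykc by blast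
  have res0: "- e0 - G *\<^sub>v yk = 0\<^sub>v k" unfolding G_yk by (rule eq_vecI) (auto simp: e0_def)
  show "\<forall>x \<in> krylov N (schur M A C) b k. (- b - S *\<^sub>v pk) \<bullet> x = 0"
  proof
    fix x assume "x \<in> krylov N (schur M A C) b k"
    then obtain z where z: "z \<in> carrier_vec k" "x = Qm k *\<^sub>v z" unfolding krylov_Qm by auto
    show "(- b - S *\<^sub>v pk) \<bullet> x = 0" unfolding z(2) pk_eq resid_orth[OF ykc z(1)] res0 using z(1) by simp
  qed
  show "\<forall>p' \<in> krylov N (schur M A C) b k.
          (\<forall>x \<in> krylov N (schur M A C) b k. (- b - S *\<^sub>v p') \<bullet> x = 0) \<longrightarrow> p' = pk"
  proof (intro ballI impI)
    fix p' assume p': "p' \<in> krylov N (schur M A C) b k"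
      and orth': "\<forall>x \<in> krylov N (schur M A C) b k. (- b - S *\<^sub>v p') \<bullet> x = 0"
    obtain z where z: "z \<in> carrier_vec k" "p' = Qm k *\<^sub>v z" using p' unfolding krylov_Qm by auto
    have R: "- e0 - G *\<^sub>v z = 0\<^sub>v k"
    proof (rule eq_vecI)
      fix i assume "i < dim_vec (0\<^sub>v k)"
      then have i: "i < k" by simp
      have ui: "unit_vec k i \<in> carrier_vec k" by simp
      have qi: "Qm k *\<^sub>v unit_vec k i \<in> krylov N (schur M A C) b k" unfolding krylov_Qm using ui by blast
      have Gz: "- e0 - G *\<^sub>v z \<in> carrier_vec k" using z(1) by simp
      have "unit_vec k i \<bullet> (- e0 - G *\<^sub>v z) = 0" using orth' qi resid_orth[OF z(1) ui] unfolding z(2) by simp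
      then show "(- e0 - G *\<^sub>v z) $ i = 0\<^sub>v k $ i" using i Gz by simp
    qed (use z(1) carrier_matD[OF Gc] in simp)
    have "G *\<^sub>v (z - yk) = G *\<^sub>v z - G *\<^sub>v yk" by (rule mult_minus_distrib_mat_vec[OF Gc z(1) ykc])
    also have "\<dots> = 0\<^sub>v k"
    proof (rule eq_vecI)
      fix i assume "i < dim_vec (0\<^sub>v k)"
      then have i: "i < k" by simp
      have "(- e0 - G *\<^sub>v z) $ i = 0" using R i by simp
      then have "(G *\<^sub>v z) $ i = (- e0) $ i" using i z(1) carrier_matD[OF Gc] by simp
      then show "(G *\<^sub>v z - G *\<^sub>v yk) $ i = 0\<^sub>v k $ i" unfolding G_yk using i z(1) carrier_matD[OF Gc]
        by (simp add: e0_def)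
    qed (use z(1) carrier_matD[OF Gc] in simp)
    finally have "z - yk = 0\<^sub>v k" using G_inj[of "z - yk"] z(1) by simp
    then have "z = yk"
    proof -
      assume d: "z - yk = 0\<^sub>v k"
      show "z = yk"
      proof (rule eq_vecI)
        fix i assume "i < dim_vec yk"
        then have i: "i < k" using ykc by simp
        have "(z - yk) $ i = 0" using d i by simp
        then show "z $ i = yk $ i" using i z(1) ykc by simp
      qed (metis carrier_vecD ykc z(1))
    qed
    then show "p' = pk" unfolding z(2) pk_eq by simp
  qed
qed

end

theorem theorem4p1:
  fixes M A C N :: "real mat" and b :: "real vec" and m n k :: nat
  assumes M: "M \<in> carrier_mat m m"
    and M_pd: "\<forall>x \<in> carrier_vec m. x \<noteq> 0\<^sub>v m \<longrightarrow> x \<bullet> (M *\<^sub>v x) > 0"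
    and A: "A \<in> carrier_mat m n" and nm: "n \<le> m"
    and A_rank: "vec_space.rank m A = n"
    and C: "C \<in> carrier_mat n n" and C_sym: "transpose_mat C = C"
    and C_psd: "\<forall>x \<in> carrier_vec n. x \<bullet> (C *\<^sub>v x) \<ge> 0"
    and b: "b \<in> carrier_vec n" and b_nz: "b \<noteq> 0\<^sub>v n"
    and N: "N \<in> carrier_mat n n" and N_sym: "transpose_mat N = N"
    and N_pd: "\<forall>x \<in> carrier_vec n. x \<noteq> 0\<^sub>v n \<longrightarrow> x \<bullet> (N *\<^sub>v x) > 0"
    and k: "1 \<le> k"
    and defined: "\<forall>j \<in> {2..k}. craig_beta M A C N b j \<noteq> 0"
  shows "invertible_mat (nscraig_H M A C N b k)
    \<and> nscraig_p M A C N b k \<in> krylov N (schur M A C) b k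
    \<and> (\<forall>x \<in> krylov N (schur M A C) b k.
          (- b - schur M A C *\<^sub>v nscraig_p M A C N b k) \<bullet> x = 0)
    \<and> (\<forall>p \<in> krylov N (schur M A C) b k.
          (\<forall>x \<in> krylov N (schur M A C) b k. (- b - schur M A C *\<^sub>v p) \<bullet> x = 0)
          \<longrightarrow> p = nscraig_p M A C N b k)
    \<and> nscraig_u M A C N b k = - (minv M *\<^sub>v (A *\<^sub>v nscraig_p M A C N b k))"
proof -
  have Ainj: "\<forall>x\<in>carrier_vec n. A *\<^sub>v x = 0\<^sub>v m \<longrightarrow> x = 0\<^sub>v n" by (rule A_inj_of_rank[OF A A_rank])
  interpret cset M A C N b m n k
    by (rule cset.intro) (use M M_pd A Ainj C C_sym C_psd b b_nz N N_sym N_pd k defined in auto)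
  have m1: "invertible_mat (nscraig_H M A C N b k)" using main(1) unfolding Hk_def .
  have m2: "nscraig_p M A C N b k \<in> krylov N (schur M A C) b k" using main(2) unfolding pk_def .
  have m3: "\<forall>x \<in> krylov N (schur M A C) b k. (- b - schur M A C *\<^sub>v nscraig_p M A C N b k) \<bullet> x = 0"
    using main(3) unfolding pk_def S_def .
  have m4: "\<forall>p \<in> krylov N (schur M A C) b k.
          (\<forall>x \<in> krylov N (schur M A C) b k. (- b - schur M A C *\<^sub>v p) \<bullet> x = 0)
          \<longrightarrow> p = nscraig_p M A C N b k" using main(4) unfolding pk_def S_def .
  have m5: "nscraig_u M A C N b k = - (minv M *\<^sub>v (A *\<^sub>v nscraig_p M A C N b k))"
    unfolding nscraig_u_def ..
  show ?thesis using m1 m2 m3 m4 m5 by (intro conjI)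
qed

end
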